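(* Let $\mathcal{B}=\langle V,F,E\rangle$ be a self-contained finite bipartite graph and let $\mathcal{S}_F$ be the set of minimal self-contained sets in $\mathcal{B}$. Then the sets in $\mathcal{S}_F$ are pairwise disjoint, and the sets in $\mathcal{S}_V=\{\mathrm{adj}_{\mathcal{B}}(S):S\in\mathcal{S}_F\}$ are pairwise disjoint.
   Context: $\mathcal{B}=\langle V,F,E\rangle$ is bipartite with variable vertices $V$ and constraint vertices $F$; $\mathrm{adj}_{\mathcal{B}}(X)$ is the set of vertices adjacent to some vertex of $X$. A set $F'\subseteq F$ is self-contained if $|F'|=|\mathrm{adj}_{\mathcal{B}}(F')|$ and $|F''|\le|\mathrm{adj}_{\mathcal{B}}(F'')|$ for all $F''\subseteq F'$. $\mathcal{B}$ is self-contained if $|F|=|V|$ and $F$ is self-contained. A non-empty self-contained set is minimal self-contained if none of its non-empty strict subsets is self-contained. *)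

theory Defs
  imports Main
begin

definition bipartite :: "'v set \<Rightarrow> 'f set \<Rightarrow> ('v \<times> 'f) set \<Rightarrow> bool" where
  "bipartite V F E \<longleftrightarrow> E \<subseteq> V \<times> F"

definition adjF :: "'v set \<Rightarrow> ('v \<times> 'f) set \<Rightarrow> 'f set \<Rightarrow> 'v set" where
  "adjF V E X = {v \<in> V. \<exists>f\<in>X. (v, f) \<in> E}"

definition self_contained_set :: "'v set \<Rightarrow> 'f set \<Rightarrow> ('v \<times> 'f) set \<Rightarrow> 'f set \<Rightarrow> bool" where
  "self_contained_set V F E F' \<longleftrightarrow>
     F' \<subseteq> F \<and> card F' = card (adjF V E F') \<and>
     (\<forall>F''. F'' \<subseteq> F' \<longrightarrow> card F'' \<le> card (adjF V E F''))"

definition self_contained_graph :: "'v set \<Rightarrow> 'f set \<Rightarrow> ('v \<times> 'f) set \<Rightarrow> bool" where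
  "self_contained_graph V F E \<longleftrightarrow> card F = card V \<and> self_contained_set V F E F"

definition minimal_self_contained :: "'v set \<Rightarrow> 'f set \<Rightarrow> ('v \<times> 'f) set \<Rightarrow> 'f set \<Rightarrow> bool" where
  "minimal_self_contained V F E S \<longleftrightarrow>
     S \<noteq> {} \<and> self_contained_set V F E S \<and>
     (\<forall>S'. S' \<noteq> {} \<and> S' \<subset> S \<longrightarrow> \<not> self_contained_set V F E S')"

end

theory Submission
  imports Defs
begin

lemma adj_Un: "adjF V E (A \<union> B) = adjF V E A \<union> adjF V E B"
  unfolding adjF_def by auto

lemma adj_Int: "adjF V E (A \<inter> B) \<subseteq> adjF V E A \<inter> adjF V E B"
  unfolding adjF_def by auto

lemma adj_empty: "adjF V E {} = {}"
  unfolding adjF_def by auto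

lemma adj_fin: "finite V \<Longrightarrow> finite (adjF V E X)"
  unfolding adjF_def by auto

lemma key:
  assumes fV: "finite V" and fF: "finite F"
    and hall: "\<And>X. X \<subseteq> F \<Longrightarrow> card X \<le> card (adjF V E X)"
    and A: "A \<subseteq> F" "card A = card (adjF V E A)"
    and B: "B \<subseteq> F" "card B = card (adjF V E B)"
  shows "card (adjF V E (A \<inter> B)) = card (A \<inter> B)
         \<and> card (adjF V E A \<inter> adjF V E B) = card (adjF V E (A \<inter> B))"
proof -
  have fA: "finite A" "finite B" using A B fF finite_subset by auto
  have fa: "finite (adjF V E A)" "finite (adjF V E B)" using adj_fin fV by auto
  have 1: "card (adjF V E A \<union> adjF V E B) + card (adjF V E A \<inter> adjF V E B)
     = card (adjF V E A) + card (adjF V E B)" using card_Un_Int[OF fa(1) fa(2)] by linarith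
  have 2: "card (A \<union> B) + card (A \<inter> B) = card A + card B" using card_Un_Int[OF fA(1) fA(2)] by linarith
  have 3: "card (adjF V E (A \<inter> B)) \<le> card (adjF V E A \<inter> adjF V E B)"
    using card_mono[OF finite_Int[OF disjI1[OF fa(1)]] adj_Int] .
  have 4: "card (A \<union> B) \<le> card (adjF V E A \<union> adjF V E B)"
  proof -
    have "A \<union> B \<subseteq> F" using A B by blast
    then have "card (A \<union> B) \<le> card (adjF V E (A \<union> B))" by (rule hall)
    then show ?thesis by (simp only: adj_Un)
  qed
  have 5: "card (A \<inter> B) \<le> card (adjF V E (A \<inter> B))"
  proof -
    have "A \<inter> B \<subseteq> F" using A B by blast
    then show ?thesis by (rule hall)
  qed
  show ?thesis using 1 2 3 4 5 A B by linarith
qed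

theorem lemma32:
  fixes V :: "'v set" and F :: "'f set" and E :: "('v \<times> 'f) set"
  assumes "finite V" and "finite F"
    and "bipartite V F E"
    and "self_contained_graph V F E"
  defines "SF \<equiv> {S. minimal_self_contained V F E S}"
  shows "pairwise disjnt SF \<and> pairwise disjnt (adjF V E ` SF)"
proof -
  have hall: "\<And>X. X \<subseteq> F \<Longrightarrow> card X \<le> card (adjF V E X)"
    using assms(4) unfolding self_contained_graph_def self_contained_set_def by blast
  have disj: "disjnt S1 S2 \<and> disjnt (adjF V E S1) (adjF V E S2)"
    if s1: "S1 \<in> SF" and s2: "S2 \<in> SF" and ne: "S1 \<noteq> S2" for S1 S2
  proof -
    have m1: "minimal_self_contained V F E S1" and m2: "minimal_self_contained V F E S2"
      using s1 s2 SF_def by auto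
    have c1: "S1 \<subseteq> F" "card S1 = card (adjF V E S1)"
      using m1 unfolding minimal_self_contained_def self_contained_set_def by auto
    have c2: "S2 \<subseteq> F" "card S2 = card (adjF V E S2)"
      using m2 unfolding minimal_self_contained_def self_contained_set_def by auto
    note k = key[OF assms(1,2) hall c1 c2]
    have sc: "self_contained_set V F E (S1 \<inter> S2)"
      unfolding self_contained_set_def
    proof (intro conjI allI impI)
      show "S1 \<inter> S2 \<subseteq> F" using c1(1) by blast
      show "card (S1 \<inter> S2) = card (adjF V E (S1 \<inter> S2))" using k by simp
      fix X assume "X \<subseteq> S1 \<inter> S2"
      then have "X \<subseteq> F" using c1(1) by blast
      then show "card X \<le> card (adjF V E X)" by (rule hall)
    qed
    have "S1 \<inter> S2 = {}"
    proof (rule ccontr)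
      assume nz: "S1 \<inter> S2 \<noteq> {}"
      show False
      proof (cases "S1 \<subseteq> S2")
        case True
        then have "S1 \<subset> S2" using ne by auto
        moreover have "\<forall>S'. S' \<noteq> {} \<and> S' \<subset> S2 \<longrightarrow> \<not> self_contained_set V F E S'"
          using m2 unfolding minimal_self_contained_def by (elim conjE)
        moreover have "S1 \<noteq> {}" "self_contained_set V F E S1"
          using m1 unfolding minimal_self_contained_def by simp_all
        ultimately show False by simp
      next
        case False
        then have "S1 \<inter> S2 \<subset> S1" by auto
        moreover have "\<forall>S'. S' \<noteq> {} \<and> S' \<subset> S1 \<longrightarrow> \<not> self_contained_set V F E S'"
          using m1 unfolding minimal_self_contained_def by (elim conjE)
        ultimately show False using nz sc by simp
      qed
    qed
    moreover have "adjF V E S1 \<inter> adjF V E S2 = {}"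
    proof -
      have "finite (adjF V E S1 \<inter> adjF V E S2)" using adj_fin assms(1) by blast
      moreover have "card (adjF V E S1 \<inter> adjF V E S2) = 0"
        using k \<open>S1 \<inter> S2 = {}\<close> by (simp add: adj_empty)
      ultimately show ?thesis by simp
    qed
    ultimately show ?thesis unfolding disjnt_def by auto
  qed
  have p1: "pairwise disjnt SF"
  proof (rule pairwiseI)
    fix x y assume "x \<in> SF" "y \<in> SF" "x \<noteq> y"
    then show "disjnt x y" using disj by blast
  qed
  have p2: "pairwise disjnt (adjF V E ` SF)"
  proof (rule pairwiseI)
    fix x y assume "x \<in> adjF V E ` SF" "y \<in> adjF V E ` SF" "x \<noteq> y"
    then obtain S1 S2 where "S1 \<in> SF" "S2 \<in> SF" "x = adjF V E S1" "y = adjF V E S2" "S1 \<noteq> S2"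
      by blast
    then show "disjnt x y" using disj by blast
  qed
  show ?thesis using p1 p2 by blast
qed

end
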